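(* Let $X$ be a real Hilbert space, $C\subseteq X$ a closed convex set, $T:C\to C$ a nonexpansive map, $x_0\in C$, and let $p\in C$ be a fixed point of $T$. Let $N\in\mathbb{N}\setminus\{0\}$ satisfy $N\geq 2\|x_0-p\|$. For every $k\in\mathbb{N}$ and every monotone function $f:\mathbb{N}\to\mathbb{N}$ there exist $n\in\mathbb{N}$ with $n\leq 24N\big(w_{f,N}^{(R)}(0)+1\big)^2$ and $x\in C\cap B_N$ such that $$\|T(x)-x\|\leq\frac{1}{f(n)+1}\quad\text{and}\quad \forall y\in C\cap B_N\ \left(\|T(y)-y\|\leq \frac{1}{n+1}\ \to\ \langle x_0-x,\,y-x\rangle\leq\frac{1}{k+1}\right),$$ where $R:=4N^4(k+1)^2$ and $w_{f,N}(m):=\max\{f(24N(m+1)^2),\,24N(m+1)^2\}$.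
   Context: $B_N:=\{x\in X:\ \|x-p\|\leq N\}$ denotes the closed ball of radius $N$ centered at the fixed point $p$. A function $f:\mathbb{N}\to\mathbb{N}$ is called monotone if $f(n)\leq f(n+1)$ for all $n\in\mathbb{N}$. For $g:\mathbb{N}\to\mathbb{N}$, $g^{(R)}$ denotes the $R$-fold composition of $g$ with itself ($g^{(0)}$ is the identity). A map $T$ is nonexpansive if $\|T(x)-T(y)\|\leq\|x-y\|$ for all $x,y$. *)

theory Defs
  imports "HOL-Analysis.Analysis"
begin

definition monotone_nat :: "(nat \<Rightarrow> nat) \<Rightarrow> bool" where
  "monotone_nat f \<longleftrightarrow> (\<forall>n. f n \<le> f (Suc n))"

definition nonexpansive_on :: "'a::real_normed_vector set \<Rightarrow> ('a \<Rightarrow> 'a) \<Rightarrow> bool" where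
  "nonexpansive_on C T \<longleftrightarrow> (\<forall>x\<in>C. \<forall>y\<in>C. norm (T x - T y) \<le> norm (x - y))"

definition w_fun :: "(nat \<Rightarrow> nat) \<Rightarrow> nat \<Rightarrow> nat \<Rightarrow> nat" where
  "w_fun f N m = max (f (24 * N * (m + 1)^2)) (24 * N * (m + 1)^2)"

end

theory Submission
  imports Defs
begin

lemma comb_id:
  fixes x y z :: "'a::real_inner"
  shows "(norm (z - (x + t *\<^sub>R (y - x))))^2 = (1-t)*(norm(z-x))^2 + t*(norm(z-y))^2 - t*(1-t)*(norm(x-y))^2"
  unfolding power2_norm_eq_inner
  by (simp add: inner_diff_left inner_diff_right inner_add_left inner_add_right inner_commute algebra_simps)

lemma step_bound:
  fixes C :: "'a::real_inner set"
  assumes ne: "nonexpansive_on C T" and cv: "convex C" and xC: "x\<in>C" and yC: "y\<in>C"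
    and ex: "norm(T x - x) \<le> e" and ey: "norm(T y - y) \<le> e" and t0: "0\<le>t" and t1: "t\<le>1"
  shows "(norm (T (x + t *\<^sub>R (y - x)) - (x + t *\<^sub>R (y - x))))^2 \<le> norm(x-y)*e + e^2"
proof -
  define u where "u = x + t *\<^sub>R (y - x)"
  have ueq: "u = (1-t) *\<^sub>R x + t *\<^sub>R y" unfolding u_def by (simp add: algebra_simps)
  have uC: "u \<in> C" unfolding ueq using cv xC yC t0 t1 by (simp add: convex_def)
  define d where "d = norm (x - y)"
  have e0: "0 \<le> e" using ex norm_ge_zero order_trans by blast
  have d0: "0 \<le> d" unfolding d_def by simp
  have ux: "norm (u - x) = t * d" unfolding u_def d_def using t0
    by (simp add: norm_minus_commute)
  have uy: "norm (u - y) = (1-t) * d"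
  proof -
    have "u - y = (1-t) *\<^sub>R (x - y)" unfolding u_def by (simp add: algebra_simps)
    thus ?thesis unfolding d_def using t1 by simp
  qed
  have a: "norm (T u - x) \<le> t*d + e"
  proof -
    have "norm (T u - x) \<le> norm (T u - T x) + norm (T x - x)" using norm_triangle_ineq[of "T u - T x" "T x - x"] by simp
    also have "norm (T u - T x) \<le> norm (u - x)" using ne uC xC unfolding nonexpansive_on_def by blast
    finally show ?thesis using ex ux by linarith
  qed
  have b: "norm (T u - y) \<le> (1-t)*d + e"
  proof -
    have "norm (T u - y) \<le> norm (T u - T y) + norm (T y - y)" using norm_triangle_ineq[of "T u - T y" "T y - y"] by simp
    also have "norm (T u - T y) \<le> norm (u - y)" using ne uC yC unfolding nonexpansive_on_def by blast
    finally show ?thesis using ey uy by linarith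
  qed
  have a2: "(norm (T u - x))^2 \<le> (t*d + e)^2" using a by (simp add: power_mono)
  have b2: "(norm (T u - y))^2 \<le> ((1-t)*d + e)^2" using b by (simp add: power_mono)
  have "(norm (T u - u))^2 = (1-t)*(norm(T u-x))^2 + t*(norm(T u-y))^2 - t*(1-t)*d^2"
    unfolding u_def d_def by (rule comb_id)
  also have "\<dots> \<le> (1-t)*(t*d + e)^2 + t*((1-t)*d + e)^2 - t*(1-t)*d^2"
    using mult_left_mono[OF a2, of "1-t"] mult_left_mono[OF b2, of t] t0 t1 by linarith
  also have "\<dots> = 4*t*(1-t)*d*e + e^2" by (simp add: power2_eq_square algebra_simps)
  also have "\<dots> \<le> d*e + e^2"
  proof -
    have "4*t*(1-t) \<le> 1" using zero_le_power2[of "2*t-1"] by (simp add: power2_eq_square algebra_simps)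

    hence "(4*t*(1-t))*(d*e) \<le> 1*(d*e)" using d0 e0 by (intro mult_right_mono) auto
    thus ?thesis by (simp add: algebra_simps)
  qed
  finally show ?thesis unfolding u_def d_def .
qed


lemma pigeon:
  fixes e :: "nat \<Rightarrow> real"
  assumes R: "R > 0" and e0: "e 0 \<ge> 0" and eR: "e R \<le> B"
  shows "\<exists>i<R. e (Suc i) - e i \<le> B / real R"
proof (rule ccontr)
  assume "\<not> ?thesis"
  hence H: "\<And>i. i < R \<Longrightarrow> e (Suc i) - e i > B / real R" by auto
  have "\<And>i. i < R \<Longrightarrow> e (Suc i) - e 0 > real (Suc i) * (B / real R)"
  proof -
    fix i show "i < R \<Longrightarrow> e (Suc i) - e 0 > real (Suc i) * (B / real R)"
    proof (induction i)
      case 0 thus ?case using H[of 0] by simp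
    next
      case (Suc i)
      hence "e (Suc i) - e 0 > real (Suc i) * (B / real R)" by simp
      moreover have "e (Suc (Suc i)) - e (Suc i) > B / real R" using H Suc by simp
      moreover have "real (Suc (Suc i)) * (B / real R) = real (Suc i) * (B / real R) + B / real R"
        by (simp add: add_divide_distrib distrib_right)
      ultimately show ?case by linarith
    qed
  qed
  from this[of "R - 1"] R have "e R - e 0 > real R * (B / real R)" by simp
  with R e0 eR show False by simp
qed

lemma arith1:
  fixes N m :: nat
  assumes "N > 0"
  shows "2*real N*(1/(real (24*N*(m+1)^2)+1)) + (1/(real (24*N*(m+1)^2)+1))^2 \<le> 1/(real m+1)^2"
proof -
  define a where "a = real N"
  define M where "M = (real m + 1)^2"
  have a1: "a \<ge> 1" using assms unfolding a_def by simp
  have M1: "M \<ge> 1" unfolding M_def by (simp add: one_le_power)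
  define q where "q = 24*a*M + 1"
  have qe: "real (24*N*(m+1)^2) + 1 = q" unfolding q_def a_def M_def by simp
  have q0: "q > 0" unfolding q_def using a1 M1 by (simp add: add_pos_nonneg)
  have aM: "a*M \<ge> 1" using a1 M1 by (metis mult_mono' mult_1 zero_le_one order_trans)
  have h1: "2*a*(1/q) \<le> 1/(2*M)"
  proof -
    have "2*a*(2*M) \<le> q" unfolding q_def using aM by (simp add: algebra_simps)
    thus ?thesis using q0 M1 by (simp add: divide_simps)
  qed
  have q1: "q \<ge> 1" unfolding q_def using a1 M1 by simp
  have h2: "(1/q)^2 \<le> 1/q"
  proof -
    have "0 \<le> 1/q" "1/q \<le> 1" using q1 by auto
    hence "(1/q)*(1/q) \<le> (1/q)*1" by (intro mult_left_mono) auto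
    thus ?thesis by (simp add: power2_eq_square)
  qed
  have h3: "1/q \<le> 1/(2*M)"
  proof -
    have "1*M \<le> a*M" using mult_right_mono[OF a1, of M] M1 by simp
    hence "2*M \<le> q" unfolding q_def using aM M1 by linarith
    thus ?thesis using q0 M1 by (simp add: divide_simps)
  qed
  have "1/(2*M) + 1/(2*M) = 1/M" by (simp add: field_simps)
  hence "2*a*(1/q) + (1/q)^2 \<le> 1/M" using h1 h2 h3 by linarith
  thus ?thesis unfolding qe[symmetric] a_def M_def by simp
qed


lemma expand_lem:
  fixes a b :: "'a::real_inner"
  shows "(norm (a - t *\<^sub>R b))^2 = (norm a)^2 - 2*t*inner a b + t^2*(norm b)^2"
  unfolding power2_norm_eq_inner
  by (simp add: inner_diff_left inner_diff_right inner_commute power2_eq_square algebra_simps)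
lemma ar2:
  fixes a e :: real assumes "a > 0"
  shows "2*(e/(4*a))*e - (e/(4*a))^2*(4*a) = 4*(e^2/(16*a))"
  using assms by (simp add: field_simps power2_eq_square)
lemma ar3a: fixes b c :: real assumes "b>0" "c>0" shows "(b/4)/(4*b^2*c) = (1/c)/(16*b)"
  using assms by (simp add: field_simps power2_eq_square)
lemma ar3:
  fixes N k :: nat assumes "N > 0"
  shows "(real N^2/4) / real (4*N^4*(k+1)^2) = (1/(real k + 1))^2/(16*real N^2)"
proof -
  have h1: "real (4*N^4*(k+1)^2) = 4 * (real N^2)^2 * (real k+1)^2" by simp
  have h2: "(1/(real k + 1))^2 = 1/(real k+1)^2" by (simp add: power_divide)
  show ?thesis unfolding h1 h2 by (rule ar3a) (use assms in auto)
qed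

theorem mainTheorem2:
  fixes C :: "'a::{real_inner, complete_space} set"
    and T :: "'a \<Rightarrow> 'a" and x0 p :: 'a and N k :: nat and f :: "nat \<Rightarrow> nat"
  assumes "closed C" and "convex C"
    and "T ` C \<subseteq> C" and "nonexpansive_on C T"
    and "x0 \<in> C" and "p \<in> C" and "T p = p"
    and "N > 0" and "real N \<ge> 2 * norm (x0 - p)"
    and "monotone_nat f"
  shows "\<exists>n x. n \<le> 24 * N * (((w_fun f N) ^^ (4 * N^4 * (k + 1)^2)) 0 + 1)^2
           \<and> x \<in> C \<and> norm (x - p) \<le> real N
           \<and> norm (T x - x) \<le> 1 / (real (f n) + 1)
           \<and> (\<forall>y\<in>C. norm (y - p) \<le> real N \<longrightarrow> norm (T y - y) \<le> 1 / (real n + 1)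
                 \<longrightarrow> inner (x0 - x) (y - x) \<le> 1 / (real k + 1))"
proof -
  note cv = assms(2) and ne = assms(4) and pC = assms(6) and Tp = assms(7) and Npos = assms(8)
    and Nx0 = assms(9)
  define \<eta> where "\<eta> = 1/(real k + 1)"
  define F where "F m = {y\<in>C. norm(y-p) \<le> real N \<and> norm(T y - y) \<le> 1/(real m + 1)}" for m
  define G where "G m = (\<lambda>y. (norm(x0-y))^2) ` F m" for m
  define E where "E m = Inf (G m)" for m
  define w where "w = w_fun f N"
  define ms where "ms i = (w^^i) 0" for i
  define R where "R = 4*N^4*(k+1)^2"
  have pF: "p \<in> F m" for m unfolding F_def using pC Tp by simp
  have Gne: "G m \<noteq> {}" for m unfolding G_def using pF by blast
  have bdd: "bdd_below (G m)" for m unfolding G_def by (rule bdd_belowI[where m=0]) auto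
  have Elow: "E m \<le> (norm(x0-y))^2" if "y\<in>F m" for m y
    unfolding E_def using bdd that unfolding G_def by (intro cInf_lower) auto
  have E0: "0 \<le> E m" for m unfolding E_def using Gne by (intro cInf_greatest) (auto simp: G_def)
  have Ep: "E m \<le> real N^2/4" for m
  proof -
    have "E m \<le> (norm(x0-p))^2" using Elow pF by blast
    also have "\<dots> \<le> (real N/2)^2" using Nx0 by (intro power_mono) auto
    finally show ?thesis by (simp add: power_divide)
  qed
  have Rpos: "R > 0" unfolding R_def using Npos by simp
  obtain i where i: "i < R" "E (ms (Suc i)) - E (ms i) \<le> (real N^2/4) / real R"
    using pigeon[OF Rpos, of "\<lambda>j. E (ms j)" "real N^2/4"] E0 Ep by blast
  define m where "m = ms i"
  define n where "n = 24*N*(m+1)^2"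
  define m' where "m' = ms (Suc i)"
  have m'w: "m' = w m" unfolding m'_def m_def ms_def by simp
  have nm': "n \<le> m'" "f n \<le> m'" unfolding m'w w_def w_fun_def n_def by auto
  have wge: "j \<le> w j" for j
  proof -
    have "j \<le> (j+1)^2" by (simp add: power2_eq_square)
    also have "\<dots> = 1*(j+1)^2" by simp
    also have "\<dots> \<le> (24*N)*(j+1)^2" using Npos by (intro mult_le_mono1) simp
    also have "\<dots> \<le> w j" unfolding w_def w_fun_def by (rule max.cobounded2)
    finally show ?thesis .
  qed
  have msmono: "ms j \<le> ms (Suc j)" for j
  proof -
    have "ms (Suc j) = w (ms j)" unfolding ms_def by simp
    thus ?thesis using wge[of "ms j"] by simp
  qed
  have "ms i \<le> ms R" using i(1) lift_Suc_mono_le[of ms i R, OF msmono] by simp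
  hence nbound: "n \<le> 24 * N * (((w_fun f N) ^^ (4 * N^4 * (k + 1)^2)) 0 + 1)^2"
    unfolding n_def m_def ms_def R_def w_def by simp
  define \<delta> where "\<delta> = \<eta>^2/(16*real N^2)"
  have Nr: "real N \<ge> 1" using Npos by simp
  have \<eta>0: "\<eta> > 0" "\<eta> \<le> 1" unfolding \<eta>_def by auto
  have \<delta>eq: "(real N^2/4) / real R = \<delta>"
    unfolding \<delta>_def R_def \<eta>_def using ar3[OF Npos, of k] by simp
  have \<delta>0: "\<delta> > 0" unfolding \<delta>_def using \<eta>0 Nr by simp
  have "Inf (G m') < E m' + \<delta>" unfolding E_def using \<delta>0 by simp
  then obtain v where "v \<in> G m'" "v < E m' + \<delta>" using cInf_lessD[OF Gne] by blast
  then obtain x where xF: "x \<in> F m'" and xd: "(norm(x0-x))^2 < E m' + \<delta>" unfolding G_def by blast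
  have xC: "x \<in> C" and xp: "norm (x-p) \<le> real N" and xT: "norm (T x - x) \<le> 1/(real m' + 1)"
    using xF unfolding F_def by auto
  have xT2: "norm (T x - x) \<le> 1 / (real (f n) + 1)"
    by (rule order_trans[OF xT], rule divide_left_mono) (use nm'(2) in auto)
  define \<epsilon> where "\<epsilon> = 1/(real n + 1)"
  have xTe: "norm (T x - x) \<le> \<epsilon>"
    unfolding \<epsilon>_def by (rule order_trans[OF xT], rule divide_left_mono) (use nm'(1) in auto)
  have xd2: "(norm(x0-x))^2 < E m + 2*\<delta>" using xd i(2) \<delta>eq unfolding m_def m'_def by linarith
  have key: "inner (x0 - x) (y - x) \<le> \<eta>"
    if yC: "y\<in>C" and yp: "norm (y - p) \<le> real N" and yT: "norm (T y - y) \<le> \<epsilon>" for y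
  proof (rule ccontr)
    assume "\<not> ?thesis"
    hence big: "inner (x0 - x) (y - x) > \<eta>" by simp
    define t where "t = \<eta>/(4*real N^2)"
    have t0: "t > 0" unfolding t_def using \<eta>0 Nr by simp
    have t1: "t \<le> 1"
    proof -
      have "1 \<le> real N^2" using Nr by (simp add: one_le_power)
      hence "1 \<le> 4*real N^2" by linarith
      thus ?thesis unfolding t_def using \<eta>0 by (simp add: divide_simps)
    qed
    define u where "u = x + t *\<^sub>R (y - x)"
    have ueq: "u = (1-t) *\<^sub>R x + t *\<^sub>R y" unfolding u_def by (simp add: algebra_simps)
    have uC: "u \<in> C" unfolding ueq using cv xC yC t0 t1 by (simp add: convex_def)
    have up: "norm (u - p) \<le> real N"
    proof -
      have "u - p = (1-t) *\<^sub>R (x - p) + t *\<^sub>R (y - p)" unfolding ueq by (simp add: algebra_simps)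
      hence "norm (u - p) \<le> (1-t) * norm (x-p) + t * norm (y-p)"
        using t0 t1 by (metis abs_of_nonneg diff_ge_0_iff_ge less_imp_le norm_scaleR norm_triangle_ineq)
      also have "\<dots> \<le> (1-t)*real N + t*real N"
        using xp yp t0 t1 by (intro add_mono mult_left_mono) auto
      finally show ?thesis by (simp add: algebra_simps)
    qed
    have dxy: "norm (x - y) \<le> 2*real N"
      using norm_triangle_ineq4[of "x-p" "y-p"] xp yp by simp
    have e0: "\<epsilon> \<ge> 0" unfolding \<epsilon>_def by simp
    have "(norm (T u - u))^2 \<le> norm(x-y)*\<epsilon> + \<epsilon>^2"
      unfolding u_def by (rule step_bound[OF ne cv xC yC xTe yT]) (use t0 t1 in auto)
    also have "\<dots> \<le> 2*real N*\<epsilon> + \<epsilon>^2" using dxy e0 by (simp add: mult_right_mono)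
    also have "\<dots> \<le> (1/(real m+1))^2"
      using arith1[OF Npos, of m] unfolding \<epsilon>_def n_def by (simp add: power_divide)
    finally have "norm (T u - u) \<le> 1/(real m+1)"
      by (rule power2_le_imp_le) simp
    hence uF: "u \<in> F m" unfolding F_def using uC up by simp
    have Eu: "E m \<le> (norm (x0 - u))^2" using Elow[OF uF] .
    have expand: "(norm (x0 - u))^2 = (norm (x0 - x))^2 - 2*t*inner (x0 - x) (y - x) + t^2*(norm (y-x))^2"
    proof -
      have h: "x0 - u = (x0 - x) - t *\<^sub>R (y - x)" unfolding u_def by (simp add: algebra_simps)
      show ?thesis unfolding h by (rule expand_lem)
    qed
    have yx2: "(norm (y-x))^2 \<le> 4*real N^2"
    proof -
      have "norm (y-x) \<le> 2*real N" using dxy by (simp add: norm_minus_commute)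
      hence "(norm (y-x))^2 \<le> (2*real N)^2" by (intro power_mono) auto
      thus ?thesis by (simp add: power_mult_distrib)
    qed
    have "2*t*inner (x0 - x) (y - x) > 2*t*\<eta>" using big t0 by simp
    moreover have "t^2*(norm (y-x))^2 \<le> t^2*(4*real N^2)" using yx2 by (intro mult_left_mono) auto
    moreover have "2*t*\<eta> - t^2*(4*real N^2) = 4*\<delta>"
      unfolding t_def \<delta>_def using ar2[of "real N^2" \<eta>] Nr by simp
    ultimately have "(norm (x0 - u))^2 < (norm (x0 - x))^2 - 4*\<delta>" using expand by linarith
    with xd2 Eu \<delta>0 show False by linarith
  qed
  show ?thesis
    apply (rule exI[of _ n], rule exI[of _ x])
    using nbound xC xp xT2 key unfolding \<epsilon>_def \<eta>_def by auto
qed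

end
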